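(* At iteration $\ell$ of the procedure, suppose $Z_{X,\ell}\in\mathbb{S}^r_{++}$, $Z_{S,\ell}\in\mathbb{S}^{n-r}_{--}$ (negative definite), and $\|Z_{O,\ell}\|_2\le\frac{3}{4\eta_\ell}$. Then the Sylvester equation $W_O Z_{X,\ell}+(-Z_{S,\ell})W_O=Z_{O,\ell}$ has a unique solution $W_{O,\ell}$ satisfying $\|W_{O,\ell}\|_2\le\eta_\ell\|Z_{O,\ell}\|_2$. Moreover, \begin{align*} &\max\{\|Z_{X,\ell+1}-Z_{X,\ell}\|_2,\ \|Z_{S,\ell+1}-Z_{S,\ell}\|_2,\ \|Z_{O,\ell+1}\|_2\}\\ \le\ &\Big(\tfrac{4}{9}\eta_\ell^4\|Z_0\|_2^3+\tfrac{4}{3}\eta_\ell^3\|Z_0\|_2^2+\tfrac{13}{3}\eta_\ell^2\|Z_0\|_2+4\eta_\ell\Big)\|Z_{O,\ell}\|_2^2 \end{align*} for all $\ell\in\mathbb{N}$.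
   Context: Let $Z=\mathrm{diag}(\lambda_1,\dots,\lambda_n)\in\mathbb{S}^n$ be nonsingular with $\lambda_1\ge\dots\ge\lambda_r>0>\lambda_{r+1}\ge\dots\ge\lambda_n$, and let $H\in\mathbb{S}^n$ be a perturbation. The iterative elimination procedure starts with $Z_0=\begin{bmatrix}Z_{X,0}&Z_{O,0}^{\mathsf T}\\ Z_{O,0}&Z_{S,0}\end{bmatrix}:=Z+H$ (blocks $Z_{X,\ell}\in\mathbb{S}^r$, $Z_{S,\ell}\in\mathbb{S}^{n-r}$, $Z_{O,\ell}\in\mathbb{R}^{(n-r)\times r}$). At iteration $\ell$ it solves $W_O Z_{X,\ell}+(-Z_{S,\ell})W_O=Z_{O,\ell}$ for $W_{O,\ell}$, sets the skew-symmetric matrix $W_\ell=\begin{bmatrix}0&-W_{O,\ell}^{\mathsf T}\\ W_{O,\ell}&0\end{bmatrix}$, and updates $Z_{\ell+1}=\begin{bmatrix}Z_{X,\ell+1}&Z_{O,\ell+1}^{\mathsf T}\\ Z_{O,\ell+1}&Z_{S,\ell+1}\end{bmatrix}:=\exp(W_\ell)^{\mathsf T}Z_\ell\exp(W_\ell)$. Define $d=\sqrt{\min\{r,n-r\}}$ and $\eta_\ell=\dfrac{d}{\lambda_{\min}(Z_{X,\ell})-\lambda_{\max}(Z_{S,\ell})}$. *)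

theory Defs
  imports "HOL-Analysis.Analysis"
begin

text \<open>Matrices are real^'c^'m (rows indexed by 'm). The full index set is 'r + 's:
  Inl a are the first r indices, Inr b the last n-r indices.\<close>

definition spec_norm :: "real^'c^'m \<Rightarrow> real" where
  "spec_norm A = onorm (\<lambda>x. A *v x)"

fun mpow :: "real^'n^'n \<Rightarrow> nat \<Rightarrow> real^'n^'n" where
  "mpow A 0 = mat 1"
| "mpow A (Suc k) = A ** mpow A k"

definition mexp :: "real^'n^'n \<Rightarrow> real^'n^'n" where
  "mexp A = (\<Sum>k. (1 / fact k) *\<^sub>R mpow A k)"

definition eigvals :: "real^'n^'n \<Rightarrow> real set" where
  "eigvals A = {\<mu>. \<exists>v. v \<noteq> 0 \<and> A *v v = \<mu> *\<^sub>R v}"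

definition lam_min :: "real^'n^'n \<Rightarrow> real" where
  "lam_min A = Min (eigvals A)"

definition lam_max :: "real^'n^'n \<Rightarrow> real" where
  "lam_max A = Max (eigvals A)"

definition pos_def :: "real^'n^'n \<Rightarrow> bool" where
  "pos_def A \<longleftrightarrow> transpose A = A \<and> (\<forall>x. x \<noteq> 0 \<longrightarrow> x \<bullet> (A *v x) > 0)"

definition neg_def :: "real^'n^'n \<Rightarrow> bool" where
  "neg_def A \<longleftrightarrow> transpose A = A \<and> (\<forall>x. x \<noteq> 0 \<longrightarrow> x \<bullet> (A *v x) < 0)"

definition diagm :: "('n \<Rightarrow> real) \<Rightarrow> real^'n^'n" where
  "diagm lam = (\<chi> i j. if i = j then lam i else 0)"

definition blkX :: "real^('r::finite+'s::finite)^('r+'s) \<Rightarrow> real^'r^'r" where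
  "blkX Z = (\<chi> a a'. Z $ Inl a $ Inl a')"

definition blkS :: "real^('r::finite+'s::finite)^('r+'s) \<Rightarrow> real^'s^'s" where
  "blkS Z = (\<chi> b b'. Z $ Inr b $ Inr b')"

definition blkO :: "real^('r::finite+'s::finite)^('r+'s) \<Rightarrow> real^'r^'s" where
  "blkO Z = (\<chi> b a. Z $ Inr b $ Inl a)"

definition skewW :: "real^'r^'s \<Rightarrow> real^('r+'s)^('r+'s)" where
  "skewW WO = (\<chi> i j. case (i, j) of
       (Inl a, Inr b) \<Rightarrow> - (WO $ b $ a)
     | (Inr b, Inl a) \<Rightarrow> WO $ b $ a
     | _ \<Rightarrow> 0)"

definition sylv_sol :: "real^('r::finite+'s::finite)^('r+'s) \<Rightarrow> real^'r^'s \<Rightarrow> bool" where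
  "sylv_sol Z W \<longleftrightarrow> W ** blkX Z + (- blkS Z) ** W = blkO Z"

definition elim_step :: "real^('r::finite+'s::finite)^('r+'s) \<Rightarrow> real^('r+'s)^('r+'s)" where
  "elim_step Z = (let E = mexp (skewW (THE W. sylv_sol Z W)) in transpose E ** Z ** E)"

definition elim_iter :: "real^('r::finite+'s::finite)^('r+'s) \<Rightarrow> nat \<Rightarrow> real^('r+'s)^('r+'s)" where
  "elim_iter Z0 l = (elim_step ^^ l) Z0"

definition eta_of :: "real^('r::finite+'s::finite)^('r+'s) \<Rightarrow> real" where
  "eta_of Z = sqrt (real (min CARD('r) CARD('s))) / (lam_min (blkX Z) - lam_max (blkS Z))"

end

theory Submission
  imports Defs
begin


lemma sn_apply: "norm ((A::real^'c^'m) *v x) \<le> spec_norm A * norm x"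
  unfolding spec_norm_def by (rule onorm) simp

lemma sn_le: "(\<And>x. norm ((A::real^'c^'m) *v x) \<le> b * norm x) \<Longrightarrow> spec_norm A \<le> b"
  unfolding spec_norm_def by (rule onorm_le)

lemma sn_nonneg: "0 \<le> spec_norm (A::real^'c^'m)"
  unfolding spec_norm_def by (rule onorm_pos_le) simp

lemma sn_mult: "spec_norm ((A::real^'c^'m) ** (B::real^'d^'c)) \<le> spec_norm A * spec_norm B"
proof (rule sn_le)
  fix x
  have "norm ((A ** B) *v x) = norm (A *v (B *v x))" by (simp add: matrix_vector_mul_assoc)
  also have "\<dots> \<le> spec_norm A * norm (B *v x)" by (rule sn_apply)
  also have "\<dots> \<le> spec_norm A * (spec_norm B * norm x)"
    by (rule mult_left_mono[OF sn_apply sn_nonneg])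
  finally show "norm ((A ** B) *v x) \<le> spec_norm A * spec_norm B * norm x" by (simp add: mult.assoc)
qed

lemma sn_add: "spec_norm ((A::real^'c^'m) + B) \<le> spec_norm A + spec_norm B"
proof -
  have "(*v) (A + B) = (\<lambda>x. A *v x + B *v x)" by (auto simp: matrix_vector_mult_add_rdistrib)
  then show ?thesis unfolding spec_norm_def by (simp add: onorm_triangle)
qed

lemma matrix_add_rdistrib': "((A::'a::semiring_1^'n^'m) + B) ** C = A ** C + B ** C"
  by (vector matrix_matrix_mult_def sum.distrib[symmetric] field_simps)

lemma sn_uminus: "spec_norm (- (A::real^'c^'m)) = spec_norm A"
proof -
  have "(*v) (- A) = (\<lambda>x. - (A *v x))" by (auto simp: matrix_vector_mult_diff_rdistrib[of 0, simplified])
  then show ?thesis unfolding spec_norm_def by (simp add: onorm_neg)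
qed

lemma sn_diff: "spec_norm ((A::real^'c^'m) - B) \<le> spec_norm A + spec_norm B"
  using sn_add[of A "-B"] by (simp add: sn_uminus)

lemma sn_scale: "spec_norm (r *\<^sub>R (A::real^'c^'m)) = \<bar>r\<bar> * spec_norm A"
proof -
  have "(*v) (r *\<^sub>R A) = (\<lambda>x. r *\<^sub>R (A *v x))" by (auto simp: scaleR_matrix_vector_assoc)
  then show ?thesis unfolding spec_norm_def by (simp add: onorm_scaleR)
qed

lemma sn_eq_0: "spec_norm (A::real^'c^'m) = 0 \<longleftrightarrow> A = 0"
  unfolding spec_norm_def
  by (simp add: onorm_eq_0) (metis matrix_vector_mult_0 matrix_eq)

lemma sn_le_sum: "spec_norm (A::real^'c^'m) \<le> (\<Sum>i\<in>UNIV. \<Sum>j\<in>UNIV. \<bar>A $ i $ j\<bar>)"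
  unfolding spec_norm_def by (rule onorm_le_matrix_component_sum)

lemma entry_le_sn: "\<bar>(A::real^'c^'m) $ i $ j\<bar> \<le> spec_norm A"
  unfolding spec_norm_def by (rule matrix_component_le_onorm)

lemma norm_le_sum_entries: "norm (A::real^'c^'m) \<le> (\<Sum>i\<in>UNIV. \<Sum>j\<in>UNIV. \<bar>A $ i $ j\<bar>)"
proof -
  have "norm A \<le> (\<Sum>i\<in>UNIV. norm (A $ i))" unfolding norm_vec_def by (rule L2_set_le_sum) simp
  also have "\<dots> \<le> (\<Sum>i\<in>UNIV. \<Sum>j\<in>UNIV. \<bar>A $ i $ j\<bar>)"
    by (rule sum_mono) (rule norm_le_l1_cart)
  finally show ?thesis .
qed

lemma entry_le_norm: "\<bar>(A::real^'c^'m) $ i $ j\<bar> \<le> norm A"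
proof -
  have "\<bar>A $ i $ j\<bar> \<le> norm (A $ i)" by (rule component_le_norm_cart)
  also have "\<dots> \<le> norm A" by (rule Finite_Cartesian_Product.norm_nth_le)
  finally show ?thesis .
qed

lemma norm_le_C_sn: "norm (A::real^'c^'m) \<le> real (CARD('m) * CARD('c)) * spec_norm A"
proof -
  have "norm A \<le> (\<Sum>i\<in>(UNIV::'m set). \<Sum>j\<in>(UNIV::'c set). spec_norm A)"
    by (rule order_trans[OF norm_le_sum_entries]) (intro sum_mono entry_le_sn)
  then show ?thesis by simp
qed

lemma sn_le_C_norm: "spec_norm (A::real^'c^'m) \<le> real (CARD('m) * CARD('c)) * norm A"
proof -
  have "spec_norm A \<le> (\<Sum>i\<in>(UNIV::'m set). \<Sum>j\<in>(UNIV::'c set). norm A)"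
    by (rule order_trans[OF sn_le_sum]) (intro sum_mono entry_le_norm)
  then show ?thesis by simp
qed

lemma mat1_ne0: "(0::real^'n^'n) \<noteq> mat 1"
proof
  assume h: "(0::real^'n^'n) = mat 1"
  have "(mat 1::real^'n^'n) $ i $ i = 1" for i by (simp add: mat_def)
  then show False by (simp flip: h)
qed

typedef ('n::finite) sqm = "UNIV :: (real^'n^'n) set" morphisms mat_of sqm_of by simp

setup_lifting type_definition_sqm

instantiation sqm :: (finite) real_normed_vector
begin
lift_definition zero_sqm :: "'a sqm" is 0 .
lift_definition plus_sqm :: "'a sqm \<Rightarrow> 'a sqm \<Rightarrow> 'a sqm" is "(+)" .
lift_definition minus_sqm :: "'a sqm \<Rightarrow> 'a sqm \<Rightarrow> 'a sqm" is "(-)" .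
lift_definition uminus_sqm :: "'a sqm \<Rightarrow> 'a sqm" is "uminus" .
lift_definition scaleR_sqm :: "real \<Rightarrow> 'a sqm \<Rightarrow> 'a sqm" is "(*\<^sub>R)" .
lift_definition norm_sqm :: "'a sqm \<Rightarrow> real" is "spec_norm" .
definition dist_sqm :: "'a sqm \<Rightarrow> 'a sqm \<Rightarrow> real" where "dist_sqm a b = norm (a - b)"
definition sgn_sqm :: "'a sqm \<Rightarrow> 'a sqm" where "sgn_sqm x = scaleR (inverse (norm x)) x"
definition uniformity_sqm :: "('a sqm \<times> 'a sqm) filter" where
  "uniformity_sqm = (INF e\<in>{0 <..}. principal {(x, y). dist x y < e})"
definition open_sqm :: "'a sqm set \<Rightarrow> bool"
  where "open_sqm S = (\<forall>x\<in>S. \<forall>\<^sub>F (x', y) in uniformity. x' = x \<longrightarrow> y \<in> S)"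
instance
proof
  fix a b :: "'a sqm" and r s :: real
  show "a + b + c = a + (b + c)" for c by transfer (simp add: algebra_simps)
  show "a + b = b + a" by transfer (simp add: algebra_simps)
  show "0 + a = a" by transfer simp
  show "- a + a = 0" by transfer simp
  show "a - b = a + - b" by transfer simp
  show "r *\<^sub>R (a + b) = r *\<^sub>R a + r *\<^sub>R b" by transfer (simp add: algebra_simps)
  show "(r + s) *\<^sub>R a = r *\<^sub>R a + s *\<^sub>R a" by transfer (simp add: algebra_simps)
  show "r *\<^sub>R s *\<^sub>R a = (r * s) *\<^sub>R a" by transfer simp
  show "1 *\<^sub>R a = a" by transfer simp
  show "dist a b = norm (a - b)" by (simp add: dist_sqm_def)
  show "sgn a = inverse (norm a) *\<^sub>R a" by (simp add: sgn_sqm_def)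
  show "(uniformity :: ('a sqm \<times> 'a sqm) filter) = (INF e\<in>{0 <..}. principal {(x, y). dist x y < e})"
    by (simp add: uniformity_sqm_def)
  show "open U = (\<forall>x\<in>U. \<forall>\<^sub>F (x', y) in uniformity. x' = x \<longrightarrow> y \<in> U)" for U :: "'a sqm set"
    by (simp add: open_sqm_def)
  show "(norm a = 0) = (a = 0)" by transfer (rule sn_eq_0)
  show "norm (a + b) \<le> norm a + norm b" by transfer (rule sn_add)
  show "norm (r *\<^sub>R a) = \<bar>r\<bar> * norm a" by transfer (rule sn_scale)
qed
end

instantiation sqm :: (finite) real_normed_algebra_1
begin
lift_definition one_sqm :: "'a sqm" is "mat 1" .
lift_definition times_sqm :: "'a sqm \<Rightarrow> 'a sqm \<Rightarrow> 'a sqm" is "(**)" .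
instance
proof
  fix a b c :: "'a sqm" and r :: real
  show "a * b * c = a * (b * c)" by transfer (simp add: matrix_mul_assoc)
  show "1 * a = a" by transfer simp
  show "a * 1 = a" by transfer simp
  show "(a + b) * c = a * c + b * c" by transfer (simp add: matrix_add_rdistrib')
  show "a * (b + c) = a * b + a * c" by transfer (simp add: matrix_add_ldistrib)
  show "(0::'a sqm) \<noteq> 1" by transfer (metis mat1_ne0)
  show "r *\<^sub>R a * b = r *\<^sub>R (a * b)" by transfer (simp add: scalar_matrix_assoc)
  show "a * r *\<^sub>R b = r *\<^sub>R (a * b)" by transfer (simp add: matrix_scalar_ac scalar_matrix_assoc)
  show "norm (a * b) \<le> norm a * norm b" by transfer (rule sn_mult)
  show "norm (1::'a sqm) = 1" apply transfer
    by (simp add: spec_norm_def onorm_id)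
qed
end



lemma norm_sqm_def': "norm (a::'n::finite sqm) = spec_norm (mat_of a)"
  by (simp add: norm_sqm.rep_eq)

lemma mat_of_norm_le: "norm (mat_of (a::'n::finite sqm)) \<le> real (CARD('n) * CARD('n)) * norm a"
  using norm_le_C_sn[of "mat_of a"] by (simp add: norm_sqm_def')

instance sqm :: (finite) banach
proof
  fix X :: "nat \<Rightarrow> 'a sqm"
  assume "Cauchy X"
  define C where "C = real (CARD('a) * CARD('a)) + 1"
  have C: "C > 0" by (simp add: C_def add_pos_nonneg)
  have le: "norm (mat_of a) \<le> C * norm a" for a :: "'a sqm"
  proof -
    have h1: "norm (mat_of a) \<le> real (CARD('a) * CARD('a)) * norm a" by (rule mat_of_norm_le)
    have "C * norm a = real (CARD('a) * CARD('a)) * norm a + norm a" by (simp add: C_def distrib_right)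
    then show ?thesis using h1 norm_ge_zero[of a] by linarith
  qed
  have "Cauchy (\<lambda>n. mat_of (X n))"
    unfolding Cauchy_iff
  proof (intro allI impI)
    fix e :: real assume "e > 0"
    then have "e / C > 0" using C by simp
    with \<open>Cauchy X\<close> obtain M where M: "\<forall>m\<ge>M. \<forall>n\<ge>M. norm (X m - X n) < e / C"
      unfolding Cauchy_iff by blast
    show "\<exists>M. \<forall>m\<ge>M. \<forall>n\<ge>M. norm (mat_of (X m) - mat_of (X n)) < e"
    proof (intro exI allI impI)
      fix m n assume "M \<le> m" "M \<le> n"
      have "norm (mat_of (X m) - mat_of (X n)) = norm (mat_of (X m - X n))"
        by (simp add: minus_sqm.rep_eq)
      also have "\<dots> \<le> C * norm (X m - X n)" by (rule le)
      also have "\<dots> < C * (e / C)" using M \<open>M \<le> m\<close> \<open>M \<le> n\<close> C by (intro mult_strict_left_mono) auto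
      finally show "norm (mat_of (X m) - mat_of (X n)) < e" using C by simp
    qed
  qed
  then obtain L where L: "(\<lambda>n. mat_of (X n)) \<longlonglongrightarrow> L"
    using Cauchy_convergent_iff convergent_def by blast
  have "(\<lambda>n. X n - sqm_of L) \<longlonglongrightarrow> 0"
  proof (rule Lim_null_comparison)
    show "\<forall>\<^sub>F n in sequentially. norm (X n - sqm_of L) \<le> real (CARD('a) * CARD('a)) * norm (mat_of (X n) - L)"
      using sn_le_C_norm[of "mat_of (X _) - L"]
      by (simp add: norm_sqm_def' minus_sqm.rep_eq sqm_of_inverse)
    show "(\<lambda>n. real (CARD('a) * CARD('a)) * norm (mat_of (X n) - L)) \<longlonglongrightarrow> 0"
      using L by (intro tendsto_mult_right_zero tendsto_norm_zero) (simp add: LIM_zero)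
  qed
  then have "X \<longlonglongrightarrow> sqm_of L" by (rule LIM_zero_cancel)
  then show "convergent X" by (auto simp: convergent_def)
qed



lemma exp_rem_split:
  fixes x :: "'a::{real_normed_algebra_1,banach}"
  shows "exp x - 1 - x = (\<Sum>n. x ^ (n + 2) /\<^sub>R fact (n + 2))"
proof -
  have s: "summable (\<lambda>n. x ^ n /\<^sub>R fact n)" by (rule summable_exp_generic)
  have "exp x = (\<Sum>n. x ^ (n + 2) /\<^sub>R fact (n + 2)) + (\<Sum>i<2. x ^ i /\<^sub>R fact i)"
    unfolding exp_def by (rule suminf_split_initial_segment[OF s])
  moreover have "(\<Sum>i<2. x ^ i /\<^sub>R fact i) = 1 + x"
    by (simp add: numeral_2_eq_2)
  ultimately show ?thesis by simp
qed

lemma norm_pow_fact: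
  fixes x :: "'a::{real_normed_algebra_1}"
  shows "norm (x ^ k /\<^sub>R fact k) \<le> norm x ^ k /\<^sub>R fact k"
  by (simp add: divide_right_mono norm_power_ineq)

lemma exp_rem_norm:
  fixes x :: "'a::{real_normed_algebra_1,banach}"
  shows "norm (exp x - 1 - x) \<le> exp (norm x) - 1 - norm x"
proof -
  have s1: "summable (\<lambda>n. norm (x ^ (n + 2) /\<^sub>R fact (n + 2)))"
    using summable_ignore_initial_segment[OF summable_norm_exp[of x], of 2] by simp
  have s2: "summable (\<lambda>n. norm x ^ (n + 2) /\<^sub>R fact (n + 2))"
    using summable_ignore_initial_segment[OF summable_exp_generic[of "norm x"], of 2] by simp
  have "norm (exp x - 1 - x) = norm (\<Sum>n. x ^ (n + 2) /\<^sub>R fact (n + 2))"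
    by (simp add: exp_rem_split)
  also have "\<dots> \<le> (\<Sum>n. norm (x ^ (n + 2) /\<^sub>R fact (n + 2)))"
    by (rule summable_norm[OF s1])
  also have "\<dots> \<le> (\<Sum>n. norm x ^ (n + 2) /\<^sub>R fact (n + 2))"
    by (rule suminf_le[OF _ s1 s2]) (rule norm_pow_fact)
  also have "\<dots> = exp (norm x) - 1 - norm x"
    by (simp add: exp_rem_split)
  finally show ?thesis .
qed

lemma exp_real_rem_scale:
  fixes y c :: real
  assumes "0 \<le> y" "y \<le> c"
  shows "exp y - 1 - y \<le> (y / c)^2 * (exp c - 1 - c)"
proof (cases "c = 0")
  case True then show ?thesis using assms by simp
next
  case False
  then have c: "c > 0" using assms by simp
  have s2: "summable (\<lambda>n. y ^ (n + 2) /\<^sub>R fact (n + 2))"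
    using summable_ignore_initial_segment[OF summable_exp_generic[of y], of 2] by simp
  have s3: "summable (\<lambda>n. c ^ (n + 2) /\<^sub>R fact (n + 2))"
    using summable_ignore_initial_segment[OF summable_exp_generic[of c], of 2] by simp
  have "exp y - 1 - y = (\<Sum>n. y ^ (n + 2) /\<^sub>R fact (n + 2))" by (rule exp_rem_split)
  also have "\<dots> \<le> (\<Sum>n. (y / c)^2 * (c ^ (n + 2) /\<^sub>R fact (n + 2)))"
  proof (rule suminf_le[OF _ s2 summable_mult[OF s3]])
    fix n
    have "y ^ n \<le> c ^ n" using assms by (simp add: power_mono)
    then have "y ^ (n + 2) \<le> (y / c)^2 * c ^ (n + 2)"
      using c assms by (simp add: power_add power2_eq_square field_simps mult_left_mono)
    then show "y ^ (n + 2) /\<^sub>R fact (n + 2) \<le> (y / c)^2 * (c ^ (n + 2) /\<^sub>R fact (n + 2))"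
      by (simp add: divide_right_mono)
  qed
  also have "\<dots> = (y / c)^2 * (\<Sum>n. c ^ (n + 2) /\<^sub>R fact (n + 2))"
    by (rule suminf_mult[OF s3])
  also have "\<dots> = (y / c)^2 * (exp c - 1 - c)" by (simp add: exp_rem_split)
  finally show ?thesis .
qed

lemma exp_three_halves: "exp (3/2::real) \<le> 79/16"
proof -
  have "exp (3/2::real) ^ 2 = exp 3" by (simp add: exp_double[symmetric] power2_eq_square exp_add[symmetric])
  also have "(exp 3 :: real) = exp 1 ^ 3" by (simp add: exp_of_nat_mult[symmetric])
  also have "\<dots> \<le> (272/100) ^ 3" using e_less_272 by (intro power_mono) auto
  also have "\<dots> \<le> (79/16)^2" by (simp add: power2_eq_square power3_eq_cube)
  finally show ?thesis by (rule power2_le_imp_le) simp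
qed

lemma exp_2t_bound:
  fixes t :: real
  assumes "0 \<le> t" "t \<le> 3/4"
  shows "exp (2 * t) - 1 - 2 * t \<le> 13/3 * t^2"
proof -
  have "exp (2 * t) - 1 - 2 * t \<le> (2 * t / (3/2))^2 * (exp (3/2) - 1 - 3/2)"
    using assms by (intro exp_real_rem_scale) auto
  also have "\<dots> \<le> (2 * t / (3/2))^2 * (79/16 - 1 - 3/2)"
    using exp_three_halves by (intro mult_left_mono) auto
  also have "\<dots> \<le> 13/3 * t^2" by (simp add: power2_eq_square)
  finally show ?thesis .
qed

lemma norm3: "norm ((a::'a::real_normed_algebra) * b * c) \<le> norm a * norm b * norm c"
  by (metis mult_right_mono norm_ge_zero norm_mult_ineq order_trans)

lemma tri6: "norm ((a::'a::real_normed_vector) - b - c + d + e + f) \<le> norm a + norm b + norm c + norm d + norm e + norm f"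
  using norm_triangle_ineq[of "a-b-c+d+e" f] norm_triangle_ineq[of "a-b-c+d" e] norm_triangle_ineq[of "a-b-c" d]
    norm_triangle_ineq4[of "a-b" c] norm_triangle_ineq4[of a b] by linarith

lemma conj_rem:
  fixes w z :: "'a::{real_normed_algebra_1,banach}"
  shows "norm (exp (-w) * z * exp w - z - (z * w - w * z)) \<le> norm z * (exp (2 * norm w) - 1 - 2 * norm w)"
proof -
  define E where "E = exp w - 1 - w"
  define F where "F = exp (-w) - 1 + w"
  define \<epsilon> where "\<epsilon> = exp (norm w) - 1 - norm w"
  have E: "norm E \<le> \<epsilon>" unfolding E_def \<epsilon>_def by (rule exp_rem_norm)
  have F: "norm F \<le> \<epsilon>" unfolding F_def \<epsilon>_def using exp_rem_norm[of "-w"] by simp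
  have "exp (-w) * z * exp w - z - (z * w - w * z) = (1 - w + F) * z * (1 + w + E) - z - (z * w - w * z)"
    by (simp add: E_def F_def)
  also have "\<dots> = z * E - w * z * w - w * z * E + F * z + F * z * w + F * z * E"
    by (simp add: algebra_simps)
  finally have eq: "exp (-w) * z * exp w - z - (z * w - w * z) = z * E - w * z * w - w * z * E + F * z + F * z * w + F * z * E" .
  have "norm (z * E - w * z * w - w * z * E + F * z + F * z * w + F * z * E)
     \<le> norm (z * E) + norm (w * z * w) + norm (w * z * E) + norm (F * z) + norm (F * z * w) + norm (F * z * E)"
    by (rule tri6)
  also have "\<dots> \<le> norm z * \<epsilon> + norm w * norm z * norm w + norm w * norm z * \<epsilon> + \<epsilon> * norm z + \<epsilon> * norm z * norm w + \<epsilon> * norm z * \<epsilon>"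
  proof -
    have e0: "0 \<le> \<epsilon>" by (rule order_trans[OF norm_ge_zero E])
    have 1: "norm (z * E) \<le> norm z * \<epsilon>" by (rule order_trans[OF norm_mult_ineq mult_left_mono[OF E norm_ge_zero]])
    have 2: "norm (w * z * w) \<le> norm w * norm z * norm w" by (rule norm3)
    have 3: "norm (w * z * E) \<le> norm w * norm z * \<epsilon>"
      by (rule order_trans[OF norm3 mult_left_mono[OF E mult_nonneg_nonneg[OF norm_ge_zero norm_ge_zero]]])
    have 4: "norm (F * z) \<le> \<epsilon> * norm z" by (rule order_trans[OF norm_mult_ineq mult_right_mono[OF F norm_ge_zero]])
    have 5: "norm (F * z * w) \<le> \<epsilon> * norm z * norm w"
      by (rule order_trans[OF norm3 mult_right_mono[OF mult_right_mono[OF F norm_ge_zero] norm_ge_zero]])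
    have 6: "norm (F * z * E) \<le> \<epsilon> * norm z * \<epsilon>"
    proof -
      have "norm (F * z * E) \<le> norm F * norm z * norm E" by (rule norm3)
      also have "\<dots> \<le> \<epsilon> * norm z * \<epsilon>" using E F e0 by (intro mult_mono) auto
      finally show ?thesis .
    qed
    show ?thesis using 1 2 3 4 5 6 by linarith
  qed
  also have "\<dots> = norm z * ((norm w + \<epsilon>)^2 + 2 * \<epsilon>)" by (simp add: algebra_simps power2_eq_square)
  also have "(norm w + \<epsilon>)^2 + 2 * \<epsilon> = exp (2 * norm w) - 1 - 2 * norm w"
  proof -
    have "exp (2 * norm w) = exp (norm w + norm w)" by (simp only: mult_2)
    also have "\<dots> = exp (norm w) * exp (norm w)" by (rule exp_add)
    finally have "exp (2 * norm w) = exp (norm w) * exp (norm w)" .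
    then show ?thesis by (simp add: \<epsilon>_def power2_eq_square algebra_simps)
  qed
  finally show ?thesis using eq by simp
qed



lemma mat_of_sqm_of[simp]: "mat_of (sqm_of A) = A"
  by (simp add: sqm_of_inverse)

lemma mat_of_mult: "mat_of (a * b) = mat_of a ** mat_of b" by (simp add: times_sqm.rep_eq)
lemma mat_of_one: "mat_of 1 = mat 1" by (simp add: one_sqm.rep_eq)
lemma mat_of_scaleR: "mat_of (r *\<^sub>R a) = r *\<^sub>R mat_of a" by (simp add: scaleR_sqm.rep_eq)
lemma mat_of_add: "mat_of (a + b) = mat_of a + mat_of b" by (simp add: plus_sqm.rep_eq)
lemma mat_of_uminus: "mat_of (- a) = - mat_of a" by (simp add: uminus_sqm.rep_eq)
lemma mat_of_minus: "mat_of (a - b) = mat_of a - mat_of b" by (simp add: minus_sqm.rep_eq)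

lemma mat_of_pow: "mat_of (a ^ k) = mpow (mat_of a) k"
  by (induction k) (simp_all add: mat_of_one mat_of_mult)

lemma bl_mat_of: "bounded_linear (mat_of :: 'n::finite sqm \<Rightarrow> real^'n^'n)"
proof (rule bounded_linear_intro)
  show "mat_of (x + y) = mat_of x + mat_of y" for x y :: "'n sqm" by (rule mat_of_add)
  show "mat_of (r *\<^sub>R x) = r *\<^sub>R mat_of x" for r x by (rule mat_of_scaleR)
  show "norm (mat_of x) \<le> norm x * real (CARD('n) * CARD('n))" for x :: "'n sqm"
    using mat_of_norm_le[of x] by (simp add: mult.commute)
qed

lemma mexp_eq: "mexp A = mat_of (exp (sqm_of A))"
proof -
  have s: "summable (\<lambda>n. sqm_of A ^ n /\<^sub>R fact n)" by (rule summable_exp_generic)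
  have "mat_of (exp (sqm_of A)) = (\<Sum>n. mat_of (sqm_of A ^ n /\<^sub>R fact n))"
    unfolding exp_def by (rule bounded_linear.suminf[OF bl_mat_of s])
  also have "\<dots> = mexp A"
    unfolding mexp_def by (simp add: mat_of_scaleR mat_of_pow inverse_eq_divide)
  finally show ?thesis by simp
qed

lemma summable_mexp: "summable (\<lambda>k. (1 / fact k) *\<^sub>R mpow (A::real^'n::finite^'n) k)"
proof -
  have s: "summable (\<lambda>n. sqm_of A ^ n /\<^sub>R fact n)" by (rule summable_exp_generic)
  have "summable (\<lambda>n. mat_of (sqm_of A ^ n /\<^sub>R fact n))"
    by (rule bounded_linear.summable[OF bl_mat_of s])
  then show ?thesis by (simp add: mat_of_scaleR mat_of_pow inverse_eq_divide)
qed

lemma mpow_commute: "A ** mpow A k = mpow A k ** A"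
proof (induction k)
  case 0 then show ?case by simp
next
  case (Suc k) then show ?case by (metis matrix_mul_assoc mpow.simps(2))
qed

lemma transpose_mpow: "transpose (mpow A k) = mpow (transpose A) k"
  by (induction k) (simp_all add: matrix_transpose_mul mpow_commute)

lemma bl_transpose: "bounded_linear (transpose :: real^'n^'m \<Rightarrow> real^'m^'n)"
proof (rule bounded_linear_intro)
  show "transpose (x + y) = transpose x + transpose y" for x y :: "real^'n^'m"
    by (simp add: transpose_def vec_eq_iff)
  show "transpose (r *\<^sub>R x) = r *\<^sub>R transpose x" for r and x :: "real^'n^'m"
    by (rule transpose_scalar)
  show "norm (transpose x) \<le> norm x * real (CARD('m) * CARD('n))" for x :: "real^'n^'m"
  proof -
    have "norm (transpose x) \<le> (\<Sum>i\<in>(UNIV::'n set). \<Sum>j\<in>(UNIV::'m set). norm x)"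
      by (rule order_trans[OF norm_le_sum_entries]) (intro sum_mono, simp add: transpose_def entry_le_norm)
    then show ?thesis by (simp add: mult_ac)
  qed
qed

lemma transpose_mexp: "transpose (mexp A) = mexp (transpose (A::real^'n::finite^'n))"
  unfolding mexp_def
  by (simp add: bounded_linear.suminf[OF bl_transpose summable_mexp] transpose_scalar transpose_mpow)

lemma adj: "inner ((A::real^'c^'m) *v x) y = inner x (transpose A *v y)"
  by (metis dot_lmul_matrix inner_commute transpose_matrix_vector)

lemma orth_norm:
  assumes "transpose Q ** Q = mat 1"
  shows "norm ((Q::real^'n^'m) *v x) = norm x"
proof -
  have "inner (Q *v x) (Q *v x) = inner x x"
    by (simp add: adj matrix_vector_mul_assoc assms)
  then show ?thesis by (simp add: norm_eq_sqrt_inner)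
qed

lemma orth_sn:
  assumes "transpose Q ** Q = mat 1"
  shows "spec_norm (Q::real^'n^'m) \<le> 1"
  by (rule sn_le) (simp add: orth_norm[OF assms])

lemma skew_orth:
  assumes "transpose W = - (W::real^'n::finite^'n)"
  shows "transpose (mexp W) ** mexp W = mat 1" "mexp W ** transpose (mexp W) = mat 1"
proof -
  have u: "sqm_of (- W) = - sqm_of W"
    by (metis mat_of_inverse mat_of_sqm_of mat_of_uminus)
  have t: "transpose (mexp W) = mat_of (exp (- sqm_of W))"
  proof -
    have "transpose (mexp W) = mexp (- W)" using transpose_mexp[of W] assms by simp
    then show ?thesis by (simp add: mexp_eq u)
  qed
  show "transpose (mexp W) ** mexp W = mat 1"
    unfolding t by (simp add: mexp_eq flip: mat_of_mult) (metis exp_minus_inverse minus_minus mat_of_one)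
  show "mexp W ** transpose (mexp W) = mat 1"
    unfolding t by (simp add: mexp_eq flip: mat_of_mult) (metis exp_minus_inverse mat_of_one)
qed

lemma sn_transpose_le: "spec_norm (transpose (A::real^'c^'m)) \<le> spec_norm A"
proof (rule sn_le)
  fix y
  have "norm (transpose A *v y) ^ 2 = inner (transpose A *v y) (transpose A *v y)"
    by (simp add: power2_norm_eq_inner)
  also have "\<dots> = inner (A *v (transpose A *v y)) y"
    by (simp add: adj)
  also have "\<dots> \<le> norm (A *v (transpose A *v y)) * norm y" by (rule norm_cauchy_schwarz)
  also have "\<dots> \<le> spec_norm A * norm (transpose A *v y) * norm y"
    by (rule mult_right_mono[OF sn_apply norm_ge_zero])
  finally have h: "norm (transpose A *v y) ^ 2 \<le> spec_norm A * norm (transpose A *v y) * norm y" .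
  show "norm (transpose A *v y) \<le> spec_norm A * norm y"
  proof (cases "norm (transpose A *v y) = 0")
    case True then show ?thesis by (simp add: sn_nonneg)
  next
    case False
    then have "norm (transpose A *v y) > 0" by simp
    with h show ?thesis by (simp add: power2_eq_square mult.assoc mult.left_commute[of "spec_norm A"])
  qed
qed

lemma sn_transpose: "spec_norm (transpose (A::real^'c^'m)) = spec_norm A"
  using sn_transpose_le[of A] sn_transpose_le[of "transpose A"] by simp



lemma sumUNIV_Plus: "(\<Sum>i\<in>(UNIV::('r::finite + 's::finite) set). f i) = (\<Sum>a\<in>UNIV. f (Inl a)) + (\<Sum>b\<in>UNIV. f (Inr b))"
  by (subst UNIV_Plus_UNIV[symmetric], subst sum.Plus) auto

definition PL :: "real^('r::finite+'s::finite)^'r" where "PL = (\<chi> a i. if i = Inl a then 1 else 0)"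
definition PR :: "real^('r::finite+'s::finite)^'s" where "PR = (\<chi> b i. if i = Inr b then 1 else 0)"

lemma ifmul1: "(if P then 1 else 0) * (x::real) = (if P then x else 0)" by simp
lemma ifmul2: "(x::real) * (if P then 1 else 0) = (if P then x else 0)" by simp

lemma PL_mult: "PL ** M = (\<chi> a. M $ Inl a)"
  by (simp add: vec_eq_iff matrix_matrix_mult_def PL_def ifmul1 sum.delta)
lemma PR_mult: "PR ** M = (\<chi> a. M $ Inr a)"
  by (simp add: vec_eq_iff matrix_matrix_mult_def PR_def ifmul1 sum.delta)
lemma mult_PLt: "M ** transpose PL = (\<chi> i a. M $ i $ Inl a)"
  by (simp add: vec_eq_iff matrix_matrix_mult_def PL_def transpose_def ifmul2 sum.delta)
lemma mult_PRt: "M ** transpose PR = (\<chi> i a. M $ i $ Inr a)"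
  by (simp add: vec_eq_iff matrix_matrix_mult_def PR_def transpose_def ifmul2 sum.delta)

lemma PL_orth: "(PL::real^('r::finite+'s::finite)^'r) ** transpose PL = mat 1"
  unfolding PL_mult by (simp add: vec_eq_iff transpose_def PL_def mat_def)
lemma PR_orth: "(PR::real^('r::finite+'s::finite)^'s) ** transpose PR = mat 1"
  unfolding PR_mult by (simp add: vec_eq_iff transpose_def PR_def mat_def)
lemma PR_PL: "(PR::real^('r::finite+'s::finite)^'s) ** transpose (PL::real^('r::finite+'s::finite)^'r) = 0"
  unfolding PR_mult by (simp add: vec_eq_iff transpose_def PL_def)

lemma blkX_eq: "blkX M = PL ** M ** transpose PL"
  by (simp add: blkX_def PL_mult mult_PLt)
lemma blkS_eq: "blkS M = PR ** M ** transpose PR"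
  by (simp add: blkS_def PR_mult mult_PRt)
lemma blkO_eq: "blkO M = PR ** M ** transpose PL"
  by (simp add: blkO_def PR_mult mult_PLt)

lemma sn_compress:
  assumes "P ** transpose P = mat 1" "Q ** transpose Q = mat 1"
  shows "spec_norm ((P::real^'n^'m) ** M ** transpose (Q::real^'k^'j)) \<le> spec_norm M"
proof -
  have p: "spec_norm P \<le> 1"
    using orth_sn[of "transpose P"] assms(1) sn_transpose[of P] by simp
  have q: "spec_norm (transpose Q) \<le> 1"
    using orth_sn[of "transpose Q"] assms(2) by simp
  have "spec_norm (P ** M ** transpose Q) \<le> spec_norm (P ** M) * spec_norm (transpose Q)" by (rule sn_mult)
  also have "\<dots> \<le> spec_norm (P ** M)"
    using q sn_nonneg[of "P ** M"] by (simp add: mult_left_le)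
  also have "\<dots> \<le> spec_norm P * spec_norm M" by (rule sn_mult)
  also have "\<dots> \<le> spec_norm M" using p sn_nonneg[of M] sn_nonneg[of P] by (simp add: mult_left_le_one_le)
  finally show ?thesis .
qed

lemma sn_blkX: "spec_norm (blkX M) \<le> spec_norm M"
  unfolding blkX_eq by (rule sn_compress[OF PL_orth PL_orth])
lemma sn_blkS: "spec_norm (blkS M) \<le> spec_norm M"
  unfolding blkS_eq by (rule sn_compress[OF PR_orth PR_orth])
lemma sn_blkO: "spec_norm (blkO M) \<le> spec_norm M"
  unfolding blkO_eq by (rule sn_compress[OF PR_orth PL_orth])

lemma blkX_add: "blkX (A + B) = blkX A + blkX B" by (simp add: blkX_def vec_eq_iff)
lemma blkS_add: "blkS (A + B) = blkS A + blkS B" by (simp add: blkS_def vec_eq_iff)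
lemma blkO_add: "blkO (A + B) = blkO A + blkO B" by (simp add: blkO_def vec_eq_iff)
lemma blkX_diff: "blkX (A - B) = blkX A - blkX B" by (simp add: blkX_def vec_eq_iff)
lemma blkS_diff: "blkS (A - B) = blkS A - blkS B" by (simp add: blkS_def vec_eq_iff)

lemma sym_entry: "transpose Z = Z \<Longrightarrow> Z $ i $ j = Z $ j $ i"
  by (metis transpose_def vec_lambda_beta)

lemma skewW_transpose: "transpose (skewW V) = - skewW V"
  by (simp add: vec_eq_iff transpose_def skewW_def split: sum.splits)



lemma cX:
  assumes "transpose Z = Z"
  shows "blkX (Z ** skewW V - skewW V ** Z) = transpose (blkO Z) ** V + transpose V ** blkO Z"
  using sym_entry[OF assms]
  by (simp add: vec_eq_iff blkX_def blkO_def skewW_def matrix_matrix_mult_def transpose_def sumUNIV_Plus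
      sum_negf[symmetric] sum_subtractf[symmetric] sum.distrib[symmetric] algebra_simps)

lemma cS:
  assumes "transpose Z = Z"
  shows "blkS (Z ** skewW V - skewW V ** Z) = - (blkO Z ** transpose V) - V ** transpose (blkO Z)"
  using sym_entry[OF assms]
  by (simp add: vec_eq_iff blkS_def blkO_def skewW_def matrix_matrix_mult_def transpose_def sumUNIV_Plus
      sum_negf[symmetric] sum_subtractf[symmetric] sum.distrib[symmetric] algebra_simps)

lemma cO:
  shows "blkO (Z ** skewW V - skewW V ** Z) = blkS Z ** V - V ** blkX Z"
  by (simp add: vec_eq_iff blkS_def blkX_def blkO_def skewW_def matrix_matrix_mult_def transpose_def sumUNIV_Plus
      sum_negf[symmetric] sum_subtractf[symmetric] sum.distrib[symmetric] algebra_simps)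




lemma PLPR_id: "transpose (PL::real^('r::finite+'s::finite)^'r) ** PL + transpose (PR::real^('r::finite+'s::finite)^'s) ** PR = mat 1"
proof -
  have "(transpose (PL::real^('r+'s)^'r) ** PL + transpose (PR::real^('r+'s)^'s) ** PR) $ i $ j = mat 1 $ i $ j" for i j
    by (cases i; cases j) (simp_all add: matrix_matrix_mult_def transpose_def PL_def PR_def mat_def ifmul1 sum.delta)
  then show ?thesis by (simp add: vec_eq_iff)
qed

lemma skewW_dec: "skewW V = transpose PR ** V ** PL - transpose PL ** transpose V ** PR"
proof -
  have "skewW V $ i $ j = (transpose PR ** V ** PL - transpose PL ** transpose V ** PR) $ i $ j" for i j
    by (cases i; cases j) (simp_all add: skewW_def matrix_matrix_mult_def transpose_def PL_def PR_def ifmul1 ifmul2 sum.delta sum.delta')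
  then show ?thesis by (simp add: vec_eq_iff)
qed

lemma sn_skewW: "spec_norm (skewW (V::real^'r::finite^'s::finite)) \<le> spec_norm V"
proof (rule sn_le)
  fix x :: "real^('r+'s)"
  define pl where "pl = (PL::real^('r+'s)^'r)"
  define pr where "pr = (PR::real^('r+'s)^'s)"
  define a where "a = V *v (pl *v x)"
  define b where "b = transpose V *v (pr *v x)"
  have oR: "transpose (transpose pr) ** transpose pr = mat 1" using PR_orth by (simp add: pr_def)
  have oL: "transpose (transpose pl) ** transpose pl = mat 1" using PL_orth by (simp add: pl_def)
  have Wx: "skewW V *v x = transpose pr *v a - transpose pl *v b"
    by (simp add: pl_def pr_def skewW_dec a_def b_def matrix_vector_mult_diff_rdistrib matrix_vector_mul_assoc matrix_mul_assoc)
  have cross: "inner (transpose pr *v a) (transpose pl *v b) = 0"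
    using adj[of "transpose pr" a "transpose pl *v b"] by (simp add: pl_def pr_def matrix_vector_mul_assoc PR_PL del: transpose_matrix_vector)
  have cross': "inner (transpose pl *v b) (transpose pr *v a) = 0"
    using cross by (simp only: inner_commute)
  have "norm (skewW V *v x)^2 = norm (transpose pr *v a)^2 + norm (transpose pl *v b)^2"
    unfolding Wx by (simp add: power2_norm_eq_inner inner_diff_left inner_diff_right cross cross' del: transpose_matrix_vector)
  also have "\<dots> = norm a ^2 + norm b ^2" by (simp add: orth_norm[OF oR] orth_norm[OF oL] del: transpose_matrix_vector)
  also have "\<dots> \<le> (spec_norm V * norm (pl *v x))^2 + (spec_norm V * norm (pr *v x))^2"
  proof -
    have "norm a \<le> spec_norm V * norm (pl *v x)" unfolding a_def by (rule sn_apply)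
    moreover have "norm b \<le> spec_norm V * norm (pr *v x)"
      unfolding b_def using sn_apply[of "transpose V" "pr *v x"] sn_transpose[of V] by simp
    ultimately show ?thesis by (intro add_mono power_mono) auto
  qed
  also have "\<dots> = (spec_norm V)^2 * (norm (pl *v x)^2 + norm (pr *v x)^2)" by (simp add: power_mult_distrib distrib_left)
  also have "norm (pl *v x)^2 + norm (pr *v x)^2 = norm x ^2"
  proof -
    have "norm (pl *v x)^2 + norm (pr *v x)^2 = inner x ((transpose pl ** pl + transpose pr ** pr) *v x)"
      using adj[of pl x "pl *v x"] adj[of pr x "pr *v x"]
      by (simp add: power2_norm_eq_inner matrix_vector_mult_add_rdistrib inner_add_right matrix_vector_mul_assoc del: transpose_matrix_vector)
    then show ?thesis by (simp add: pl_def pr_def PLPR_id power2_norm_eq_inner)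
  qed
  finally have "norm (skewW V *v x)^2 \<le> (spec_norm V * norm x)^2" by (simp add: power_mult_distrib)
  then show "norm (skewW V *v x) \<le> spec_norm V * norm x"
    by (rule power2_le_imp_le) (use sn_nonneg[of V] in auto)
qed



lemma quad_zero:
  fixes b c :: real
  assumes "\<And>t. 0 \<le> 2 * t * c + t^2 * b"
  shows "c = 0"
proof (rule ccontr)
  assume c: "c \<noteq> 0"
  show False
  proof (cases "b \<le> 0")
    case True
    have "0 \<le> 2 * (-c) * c + (-c)^2 * b" by (rule assms)
    moreover have "(-c)^2 * b \<le> 0" using True by (simp add: mult_nonneg_nonpos)
    moreover have "2 * (-c) * c < 0" using c by (simp add: power2_eq_square[symmetric])
    ultimately show False by linarith
  next
    case False
    then have b: "b > 0" by simp
    have "0 \<le> 2 * (-c/b) * c + (-c/b)^2 * b" by (rule assms)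
    also have "\<dots> = - (c^2 / b)" using b by (simp add: power2_eq_square field_simps)
    moreover have "c^2 / b > 0" using b c by simp
    ultimately show False by linarith
  qed
qed

lemma sym_adj: "transpose A = A \<Longrightarrow> inner u ((A::real^'n^'n) *v v) = inner v (A *v u)"
  by (metis adj inner_commute)

lemma rayleigh_min:
  fixes A :: "real^'n::finite^'n"
  assumes sym: "transpose A = A"
  shows "\<exists>m v. v \<noteq> 0 \<and> A *v v = m *\<^sub>R v \<and> (\<forall>x. m * inner x x \<le> inner x (A *v x))"
proof -
  define f where "f x = inner x (A *v x)" for x :: "real^'n"
  have cont: "continuous_on (sphere 0 1) f"
    unfolding f_def by (intro continuous_intros)
  have "(axis undefined 1 :: real^'n) \<in> sphere 0 1" by simp
  then have ne: "sphere (0::real^'n) 1 \<noteq> {}" by blast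
  obtain v where v: "v \<in> sphere 0 1" and vmin: "\<And>y. y \<in> sphere 0 1 \<Longrightarrow> f v \<le> f y"
    using continuous_attains_inf[OF compact_sphere ne cont] by blast
  define m where "m = f v"
  have nv: "norm v = 1" using v by simp
  have quad: "m * inner x x \<le> inner x (A *v x)" for x
  proof (cases "x = 0")
    case True then show ?thesis by simp
  next
    case False
    then have nx: "norm x > 0" by simp
    have "f v \<le> f (x /\<^sub>R norm x)" by (rule vmin) (use nx in simp)
    also have "f (x /\<^sub>R norm x) = inner x (A *v x) / (norm x)^2"
      by (simp add: f_def matrix_vector_mult_scaleR power2_eq_square divide_inverse)
    finally have "m \<le> inner x (A *v x) / (norm x)^2" by (simp add: m_def)
    then have "m * (norm x)^2 \<le> inner x (A *v x)" using nx by (simp add: pos_le_divide_eq)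
    then show ?thesis by (simp add: power2_norm_eq_inner)
  qed
  define g where "g x = inner x (A *v x) - m * inner x x" for x
  have g0: "0 \<le> g x" for x using quad[of x] by (simp add: g_def)
  have gv: "g v = 0" using nv by (simp add: g_def m_def f_def power2_norm_eq_inner[symmetric])
  define u where "u = A *v v - m *\<^sub>R v"
  have exp: "g (v + t *\<^sub>R u) = 2 * t * inner u u + t^2 * g u" for t
  proof -
    have s: "inner v (A *v u) = inner u (A *v v)" by (rule sym_adj[OF sym])
    have "g (v + t *\<^sub>R u) = g v + 2 * t * (inner u (A *v v) - m * inner u v) + t^2 * g u"
      by (simp add: g_def matrix_vector_right_distrib matrix_vector_mult_scaleR inner_add_left inner_add_right
          s inner_commute[of v u] power2_eq_square algebra_simps)
    also have "inner u (A *v v) - m * inner u v = inner u u" by (simp add: u_def inner_diff_right)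
    finally show ?thesis using gv by simp
  qed
  have "inner u u = 0"
    by (rule quad_zero[of "inner u u" "g u"]) (metis exp g0)
  then have "A *v v = m *\<^sub>R v" by (simp add: u_def)
  moreover have "v \<noteq> 0" using nv by auto
  ultimately show ?thesis using quad by blast
qed

lemma eig_orth:
  assumes sym: "transpose A = (A::real^'n::finite^'n)"
    and u: "A *v u = \<mu> *\<^sub>R u" and v: "A *v v = \<nu> *\<^sub>R v" and ne: "\<mu> \<noteq> \<nu>"
  shows "inner u v = 0"
proof -
  have "\<nu> * inner u v = inner u (A *v v)" by (simp add: v)
  also have "\<dots> = inner v (A *v u)" by (rule sym_adj[OF sym])
  also have "\<dots> = \<mu> * inner u v" by (simp add: u inner_commute)
  finally show ?thesis using ne by simp
qed

lemma eigvals_finite: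
  assumes sym: "transpose A = (A::real^'n::finite^'n)"
  shows "finite (eigvals A)"
proof (rule ccontr)
  assume inf: "infinite (eigvals A)"
  define ev where "ev \<mu> = (SOME v. v \<noteq> 0 \<and> A *v v = \<mu> *\<^sub>R v)" for \<mu>
  have ev: "ev \<mu> \<noteq> 0 \<and> A *v ev \<mu> = \<mu> *\<^sub>R ev \<mu>" if "\<mu> \<in> eigvals A" for \<mu>
    unfolding ev_def by (rule someI_ex) (use that in \<open>simp add: eigvals_def\<close>)
  obtain T where T: "finite T" "card T = CARD('n) + 1" "T \<subseteq> eigvals A"
    using infinite_arbitrarily_large[OF inf] by blast
  have orth: "inner (ev \<mu>) (ev \<nu>) = 0" if "\<mu> \<in> T" "\<nu> \<in> T" "\<mu> \<noteq> \<nu>" for \<mu> \<nu>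
    using eig_orth[OF sym, of "ev \<mu>" \<mu> "ev \<nu>" \<nu>] ev that T(3) by blast
  have inj: "inj_on ev T"
  proof (rule inj_onI)
    fix \<mu> \<nu> assume h: "\<mu> \<in> T" "\<nu> \<in> T" "ev \<mu> = ev \<nu>"
    show "\<mu> = \<nu>"
    proof (rule ccontr)
      assume "\<mu> \<noteq> \<nu>"
      then have "inner (ev \<mu>) (ev \<mu>) = 0" using orth[of \<mu> \<nu>] h by simp
      then show False using ev[of \<mu>] h T(3) by auto
    qed
  qed
  have "pairwise orthogonal (ev ` T)"
    unfolding pairwise_def orthogonal_def using orth by blast
  moreover have "0 \<notin> ev ` T" using ev T(3) by auto
  ultimately have "independent (ev ` T)" by (rule pairwise_orthogonal_independent)
  then have "card (ev ` T) \<le> DIM(real^'n)" using independent_bound by blast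
  then have "card T \<le> CARD('n)" using card_image[OF inj] by simp
  then show False using T(2) by simp
qed

lemma lam_min_prop:
  assumes sym: "transpose A = (A::real^'n::finite^'n)"
  shows "lam_min A \<in> eigvals A" "\<And>x. lam_min A * inner x x \<le> inner x (A *v x)"
proof -
  obtain m v where mv: "v \<noteq> 0" "A *v v = m *\<^sub>R v" and q: "\<And>x. m * inner x x \<le> inner x (A *v x)"
    using rayleigh_min[OF sym] by blast
  have mem: "m \<in> eigvals A" using mv by (auto simp: eigvals_def)
  have least: "m \<le> \<mu>" if mu: "\<mu> \<in> eigvals A" for \<mu>
  proof -
    obtain u where u: "u \<noteq> 0" "A *v u = \<mu> *\<^sub>R u" using mu by (auto simp: eigvals_def)
    have "m * inner u u \<le> \<mu> * inner u u" using q[of u] u by simp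
    moreover have "inner u u > 0" using u by simp
    ultimately show ?thesis by simp
  qed
  have "lam_min A = m" unfolding lam_min_def
    by (rule Min_eqI[OF eigvals_finite[OF sym]]) (use least mem in auto)
  then show "lam_min A \<in> eigvals A" "\<And>x. lam_min A * inner x x \<le> inner x (A *v x)"
    using mem q by auto
qed

lemma transpose_uminus: "transpose (- A) = - transpose (A::real^'n^'m)"
  by (simp add: transpose_def vec_eq_iff)

lemma lam_max_prop:
  assumes sym: "transpose A = (A::real^'n::finite^'n)"
  shows "lam_max A \<in> eigvals A" "\<And>x. inner x (A *v x) \<le> lam_max A * inner x x"
proof -
  have sym': "transpose (-A) = -A" by (simp add: transpose_uminus sym)
  obtain m v where mv: "v \<noteq> 0" "(-A) *v v = m *\<^sub>R v" and q: "\<And>x. m * inner x x \<le> inner x ((-A) *v x)"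
    using rayleigh_min[OF sym'] by blast
  have negA: "(-A) *v x = - (A *v x)" for x by (simp add: matrix_vector_mult_diff_rdistrib[of 0, simplified])
  have "A *v v = (-m) *\<^sub>R v" using mv(2) negA[of v] by (metis minus_minus scaleR_minus_left)
  then have mem: "-m \<in> eigvals A" using mv(1) by (auto simp: eigvals_def)
  have q': "inner x (A *v x) \<le> (-m) * inner x x" for x using q[of x] negA[of x] by simp
  have great: "\<mu> \<le> -m" if mu: "\<mu> \<in> eigvals A" for \<mu>
  proof -
    obtain u where u: "u \<noteq> 0" "A *v u = \<mu> *\<^sub>R u" using mu by (auto simp: eigvals_def)
    have "\<mu> * inner u u \<le> (-m) * inner u u" using q'[of u] u by simp
    moreover have "inner u u > 0" using u by simp
    ultimately show ?thesis by (meson mult_le_cancel_right_pos)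
  qed
  have "lam_max A = -m" unfolding lam_max_def
    by (rule Max_eqI[OF eigvals_finite[OF sym]]) (use great mem in auto)
  then show "lam_max A \<in> eigvals A" "\<And>x. inner x (A *v x) \<le> lam_max A * inner x x"
    using mem q' by auto
qed

lemma pos_def_lam: "pos_def X \<Longrightarrow> lam_min X > 0"
proof -
  assume p: "pos_def X"
  then have sym: "transpose X = X" by (simp add: pos_def_def)
  obtain u where u: "u \<noteq> 0" "X *v u = lam_min X *\<^sub>R u"
    using lam_min_prop(1)[OF sym] by (auto simp: eigvals_def)
  have "0 < inner u (X *v u)" using p u(1) by (simp add: pos_def_def)
  then have "0 < lam_min X * inner u u" using u(2) by simp
  moreover have "0 < inner u u" using u(1) by simp
  ultimately show ?thesis by (simp add: zero_less_mult_iff)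
qed

lemma neg_def_lam: "neg_def S \<Longrightarrow> lam_max S < 0"
proof -
  assume p: "neg_def S"
  then have sym: "transpose S = S" by (simp add: neg_def_def)
  obtain u where u: "u \<noteq> 0" "S *v u = lam_max S *\<^sub>R u"
    using lam_max_prop(1)[OF sym] by (auto simp: eigvals_def)
  have "inner u (S *v u) < 0" using p u(1) by (simp add: neg_def_def)
  then have "lam_max S * inner u u < 0" using u(2) by simp
  moreover have "0 < inner u u" using u(1) by simp
  ultimately show ?thesis by (simp add: mult_less_0_iff)
qed



lemma inner_transpose: "inner (transpose A) (transpose B) = inner (A::real^'c^'m) B"
  unfolding inner_vec_def transpose_def by (simp add: inner_real_def) (rule sum.swap)

lemma mult_row: "((W::real^'r^'s) ** X) $ b = transpose X *v (W $ b)"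
  by (simp add: vec_eq_iff matrix_matrix_mult_def matrix_vector_mult_def transpose_def mult.commute)

lemma quad_mat:
  assumes sym: "transpose X = X" and q: "\<And>x. c * inner x x \<le> inner x (X *v x)"
  shows "c * inner W W \<le> inner (W::real^'r^'s) (W ** X)"
proof -
  have "c * inner W W = (\<Sum>b\<in>UNIV. c * inner (W $ b) (W $ b))"
    by (simp add: inner_vec_def sum_distrib_left)
  also have "\<dots> \<le> (\<Sum>b\<in>UNIV. inner (W $ b) (X *v (W $ b)))"
    by (rule sum_mono) (rule q)
  also have "\<dots> = inner W (W ** X)"
    by (simp add: inner_vec_def mult_row sym)
  finally show ?thesis .
qed

lemma quad_mat_left:
  assumes sym: "transpose S = S" and q: "\<And>x. c * inner x x \<le> inner x (S *v x)"
  shows "c * inner W W \<le> inner (W::real^'r^'s) (S ** W)"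
proof -
  have "c * inner (transpose W) (transpose W) \<le> inner (transpose W) (transpose W ** S)"
    by (rule quad_mat[OF sym q])
  moreover have "transpose W ** S = transpose (S ** W)" by (simp add: matrix_transpose_mul sym)
  ultimately show ?thesis by (simp add: inner_transpose)
qed

definition sylvL :: "real^'r^'r \<Rightarrow> real^'s^'s \<Rightarrow> real^'r^'s \<Rightarrow> real^'r^'s" where
  "sylvL X S W = W ** X + (- S) ** W"

lemma sylv_key:
  assumes sX: "transpose X = X" and sS: "transpose S = S"
  shows "(lam_min X - lam_max S) * inner W W \<le> inner W (sylvL X S W)"
proof -
  have a: "lam_min X * inner W W \<le> inner W (W ** X)"
    by (rule quad_mat[OF sX lam_min_prop(2)[OF sX]])
  have sS': "transpose (-S) = -S" by (simp add: transpose_uminus sS)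
  have q: "(- lam_max S) * inner x x \<le> inner x ((-S) *v x)" for x
  proof -
    have "(-S) *v x = - (S *v x)" by (simp add: matrix_vector_mult_diff_rdistrib[of 0, simplified])
    then show ?thesis using lam_max_prop(2)[OF sS, of x] by simp
  qed
  have b: "(- lam_max S) * inner W W \<le> inner W ((-S) ** W)"
    by (rule quad_mat_left[OF sS' q])
  show ?thesis using a b by (simp add: sylvL_def inner_add_right algebra_simps)
qed

lemma neg_mult: "(- A) ** B = - ((A::real^'c^'m) ** (B::real^'d^'c))"
  by (simp add: matrix_matrix_mult_def vec_eq_iff sum_negf)

lemma sylvL_alt: "sylvL X S W = W ** X - S ** W"
  by (simp add: sylvL_def neg_mult)

lemma linear_sylvL: "linear (sylvL X S)"
proof (rule linearI)
  show "sylvL X S (x + y) = sylvL X S x + sylvL X S y" for x y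
    by (simp add: sylvL_def matrix_add_rdistrib' matrix_add_ldistrib)
  have a: "(c *\<^sub>R x) ** X = c *\<^sub>R (x ** X)" for c x by (simp add: scalar_matrix_assoc)
  have b: "S ** (c *\<^sub>R x) = c *\<^sub>R (S ** x)" for c x by (simp add: matrix_scalar_ac scalar_matrix_assoc)
  show "sylvL X S (c *\<^sub>R x) = c *\<^sub>R sylvL X S x" for c x
    by (simp only: sylvL_alt a b scaleR_diff_right)
qed

lemma sylv_unique_exists:
  assumes sX: "transpose X = X" and sS: "transpose S = S" and g: "lam_min X - lam_max S > 0"
  shows "\<exists>!W. sylvL X S W = (Ob::real^'r::finite^'s::finite)"
proof -
  have inj: "inj (sylvL X S)"
  proof (rule injI)
    fix W1 W2 assume h: "sylvL X S W1 = sylvL X S W2"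
    have "sylvL X S (W1 - W2) = 0"
      using h by (simp add: linear_diff[OF linear_sylvL])
    then have "(lam_min X - lam_max S) * inner (W1 - W2) (W1 - W2) \<le> 0"
      using sylv_key[OF sX sS, of "W1 - W2"] by simp
    then have "inner (W1 - W2) (W1 - W2) \<le> 0" using g by (simp add: mult_le_0_iff)
    then show "W1 = W2" by (metis eq_iff_diff_eq_0 inner_gt_zero_iff not_le)
  qed
  have "surj (sylvL X S)"
    by (rule linear_injective_imp_surjective[OF linear_sylvL inj]) simp
  then obtain W where W: "sylvL X S W = Ob" by (metis surjD)
  show ?thesis
  proof (rule ex1I)
    show "sylvL X S W = Ob" by (rule W)
    fix W' assume "sylvL X S W' = Ob"
    then show "W' = W" using inj W by (metis injD)
  qed
qed

lemma sylv_frob: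
  assumes sX: "transpose X = X" and sS: "transpose S = S" and g: "lam_min X - lam_max S > 0"
  shows "norm W \<le> norm (sylvL X S (W::real^'r^'s)) / (lam_min X - lam_max S)"
proof -
  have "(lam_min X - lam_max S) * (norm W)^2 \<le> inner W (sylvL X S W)"
    using sylv_key[OF sX sS, of W] by (simp add: power2_norm_eq_inner)
  also have "\<dots> \<le> norm W * norm (sylvL X S W)" by (rule norm_cauchy_schwarz)
  finally have h: "(lam_min X - lam_max S) * (norm W)^2 \<le> norm W * norm (sylvL X S W)" .
  show ?thesis
  proof (cases "W = 0")
    case True then show ?thesis using g by simp
  next
    case False
    then have "norm W > 0" by simp
    have e: "norm W * ((lam_min X - lam_max S) * norm W) = (lam_min X - lam_max S) * (norm W)^2"
      by (simp add: power2_eq_square)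
    have "norm W * ((lam_min X - lam_max S) * norm W) \<le> norm W * norm (sylvL X S W)"
      using h e by linarith
    then have "(lam_min X - lam_max S) * norm W \<le> norm (sylvL X S W)"
      using \<open>norm W > 0\<close> by (simp only: mult_le_cancel_left_pos)
    then show ?thesis using g by (simp add: pos_le_divide_eq mult.commute)
  qed
qed

lemma norm_sq_rows: "(norm (A::real^'c^'m))^2 = (\<Sum>i\<in>UNIV. (norm (A $ i))^2)"
  by (simp add: power2_norm_eq_inner inner_vec_def)

lemma norm_row_le: "norm ((A::real^'c^'m) $ i) \<le> spec_norm A"
proof -
  have "A $ i = column i (transpose A)" by (simp add: column_def transpose_def vec_eq_iff)
  moreover have "norm (column i (transpose A)) \<le> onorm ((*v) (transpose A))"
    by (rule norm_column_le_onorm)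
  ultimately have "norm (A $ i) \<le> spec_norm (transpose A)"
    by (simp only: spec_norm_def)
  then show ?thesis by (simp add: sn_transpose)
qed

lemma norm_sq_vec: "(norm (y::real^'n))^2 = (\<Sum>i\<in>UNIV. (y $ i)^2)"
  unfolding power2_norm_eq_inner by (simp only: inner_vec_def inner_real_def power2_eq_square)

lemma sn_le_norm: "spec_norm (A::real^'c^'m) \<le> norm A"
proof (rule sn_le)
  fix x
  have "(norm (A *v x))^2 = (\<Sum>i\<in>UNIV. ((A *v x) $ i)^2)" by (rule norm_sq_vec)
  also have "\<dots> = (\<Sum>i\<in>UNIV. (inner (A $ i) x)^2)" by (simp only: matrix_vector_mul_component)
  finally have "(norm (A *v x))^2 = (\<Sum>i\<in>UNIV. (inner (A $ i) x)^2)" .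
  also have "\<dots> \<le> (\<Sum>i\<in>UNIV. (norm (A $ i))^2 * (norm x)^2)"
  proof (rule sum_mono)
    fix i
    have cs: "\<bar>inner (A $ i) x\<bar> \<le> norm (A $ i) * norm x" by (rule Cauchy_Schwarz_ineq2)
    have "(inner (A $ i) x)^2 \<le> (norm (A $ i) * norm x)^2"
      using power_mono[OF cs abs_ge_zero, of 2] by (simp only: power2_abs)
    then show "(inner (A $ i) x)^2 \<le> (norm (A $ i))^2 * (norm x)^2" by (simp add: power_mult_distrib)
  qed
  also have "\<dots> = (\<Sum>i\<in>UNIV. (norm (A $ i))^2) * (norm x)^2" by (rule sum_distrib_right[symmetric])
  also have "\<dots> = (norm A * norm x)^2" by (simp only: norm_sq_rows[symmetric] power_mult_distrib)
  finally have "(norm (A *v x))^2 \<le> (norm A * norm x)^2" .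
  then show "norm (A *v x) \<le> norm A * norm x"
    by (rule power2_le_imp_le) simp
qed



lemma norm_le_sqrt_sn: "norm (A::real^'c^'m) \<le> sqrt (real (min CARD('c) CARD('m))) * spec_norm A"
proof -
  have r: "(norm A)^2 \<le> real CARD('m) * (spec_norm A)^2"
  proof -
    have "(norm A)^2 \<le> (\<Sum>i\<in>(UNIV::'m set). (spec_norm A)^2)"
      unfolding norm_sq_rows by (intro sum_mono power_mono norm_row_le) simp
    then show ?thesis by simp
  qed
  have c: "(norm A)^2 \<le> real CARD('c) * (spec_norm A)^2"
  proof -
    have "(norm (transpose A))^2 \<le> (\<Sum>i\<in>(UNIV::'c set). (spec_norm (transpose A))^2)"
      unfolding norm_sq_rows by (intro sum_mono power_mono norm_row_le) simp
    moreover have "norm (transpose A) = norm A"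
      by (simp add: norm_eq_sqrt_inner inner_transpose)
    ultimately show ?thesis by (simp add: sn_transpose)
  qed
  have "(norm A)^2 \<le> real (min CARD('c) CARD('m)) * (spec_norm A)^2"
    using r c by (simp add: min_def)
  then have "(norm A)^2 \<le> (sqrt (real (min CARD('c) CARD('m))) * spec_norm A)^2"
    by (simp add: power_mult_distrib)
  then show ?thesis by (rule power2_le_imp_le) (simp add: sn_nonneg)
qed



lemma iter_Suc: "elim_iter Z0 (Suc l) = elim_step (elim_iter Z0 l)"
  by (simp add: elim_iter_def)

lemma transpose_mexp_skew:
  assumes "transpose W = - (W::real^'n::finite^'n)"
  shows "transpose (mexp W) = mat_of (exp (- sqm_of W))"
proof -
  have u: "sqm_of (- W) = - sqm_of W"
    by (metis mat_of_inverse mat_of_sqm_of mat_of_uminus)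
  have "transpose (mexp W) = mexp (- W)" using transpose_mexp[of W] assms by simp
  then show ?thesis by (simp add: mexp_eq u)
qed

lemma conj_eq:
  assumes "transpose W = - (W::real^'n::finite^'n)"
  shows "transpose (mexp W) ** Z ** mexp W = mat_of (exp (- sqm_of W) * sqm_of Z * exp (sqm_of W))"
  unfolding transpose_mexp_skew[OF assms] by (simp add: mexp_eq mat_of_mult)

lemma step_eq:
  "elim_step Z = mat_of (exp (- sqm_of (skewW (THE W. sylv_sol Z W))) * sqm_of Z * exp (sqm_of (skewW (THE W. sylv_sol Z W))))"
  unfolding elim_step_def Let_def by (rule conj_eq[OF skewW_transpose])

lemma step_sym: "transpose Z = Z \<Longrightarrow> transpose (elim_step Z) = elim_step Z"
  unfolding elim_step_def Let_def by (simp add: matrix_transpose_mul matrix_mul_assoc)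

lemma step_norm: "spec_norm (elim_step Z) \<le> spec_norm Z"
proof -
  define E where "E = mexp (skewW (THE W. sylv_sol Z W))"
  have o1: "transpose E ** E = mat 1" and o2: "E ** transpose E = mat 1"
    unfolding E_def by (rule skew_orth[OF skewW_transpose])+
  have e1: "spec_norm E \<le> 1" by (rule orth_sn[OF o1])
  have e2: "spec_norm (transpose E) \<le> 1" by (rule orth_sn) (simp add: o2)
  have "elim_step Z = transpose E ** Z ** E" by (simp add: elim_step_def E_def Let_def)
  also have "spec_norm \<dots> \<le> spec_norm (transpose E ** Z) * spec_norm E" by (rule sn_mult)
  also have "\<dots> \<le> spec_norm (transpose E ** Z)"
    using e1 sn_nonneg[of "transpose E ** Z"] by (simp add: mult_left_le)
  also have "\<dots> \<le> spec_norm (transpose E) * spec_norm Z" by (rule sn_mult)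
  also have "\<dots> \<le> spec_norm Z" using e2 sn_nonneg[of Z] sn_nonneg[of "transpose E"] by (simp add: mult_left_le_one_le)
  finally show ?thesis .
qed

lemma iter_sym: "transpose Z0 = Z0 \<Longrightarrow> transpose (elim_iter Z0 l) = elim_iter Z0 l"
  by (induction l) (simp_all add: iter_Suc step_sym, simp add: elim_iter_def)

lemma iter_norm: "spec_norm (elim_iter Z0 l) \<le> spec_norm Z0"
proof (induction l)
  case 0 then show ?case by (simp add: elim_iter_def)
next
  case (Suc l) then show ?case using step_norm[of "elim_iter Z0 l"] by (simp add: iter_Suc)
qed

lemma sn_prod_t1: "spec_norm (transpose A ** B) \<le> spec_norm (A::real^'c^'m) * spec_norm (B::real^'d^'m)"
  using sn_mult[of "transpose A" B] by (simp add: sn_transpose)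
lemma sn_prod_t2: "spec_norm (A ** transpose B) \<le> spec_norm (A::real^'c^'m) * spec_norm (B::real^'c^'d)"
  using sn_mult[of A "transpose B"] by (simp add: sn_transpose)



theorem lemma9:
  fixes lam :: "'r::finite + 's::finite \<Rightarrow> real"
    and H :: "real^('r+'s)^('r+'s)"
    and l :: nat
  assumes "\<forall>a. lam (Inl a) > 0" and "\<forall>b. lam (Inr b) < 0"
    and "transpose H = H"
    and "pos_def (blkX (elim_iter (diagm lam + H) l))"
    and "neg_def (blkS (elim_iter (diagm lam + H) l))"
    and "spec_norm (blkO (elim_iter (diagm lam + H) l))
           \<le> 3 / (4 * eta_of (elim_iter (diagm lam + H) l))"
  shows "(\<exists>!W. sylv_sol (elim_iter (diagm lam + H) l) W)
    \<and> (\<forall>W. sylv_sol (elim_iter (diagm lam + H) l) W \<longrightarrow>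
          spec_norm W \<le> eta_of (elim_iter (diagm lam + H) l)
                          * spec_norm (blkO (elim_iter (diagm lam + H) l)))
    \<and> max (spec_norm (blkX (elim_iter (diagm lam + H) (Suc l)) - blkX (elim_iter (diagm lam + H) l)))
          (max (spec_norm (blkS (elim_iter (diagm lam + H) (Suc l)) - blkS (elim_iter (diagm lam + H) l)))
               (spec_norm (blkO (elim_iter (diagm lam + H) (Suc l)))))
      \<le> (4/9 * eta_of (elim_iter (diagm lam + H) l) ^ 4 * spec_norm (diagm lam + H) ^ 3
         + 4/3 * eta_of (elim_iter (diagm lam + H) l) ^ 3 * spec_norm (diagm lam + H) ^ 2
         + 13/3 * eta_of (elim_iter (diagm lam + H) l) ^ 2 * spec_norm (diagm lam + H)
         + 4 * eta_of (elim_iter (diagm lam + H) l))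
        * spec_norm (blkO (elim_iter (diagm lam + H) l)) ^ 2"
  proof -
  define Z0 where "Z0 = diagm lam + H"
  define Z where "Z = elim_iter Z0 l"
  define X where "X = blkX Z"
  define S where "S = blkS Z"
  define Ob where "Ob = blkO Z"
  define N where "N = spec_norm Z0"
  define \<eta> where "\<eta> = eta_of Z"
  define g where "g = lam_min X - lam_max S"
  have Z0sym: "transpose Z0 = Z0"
    using sym_entry[OF assms(3)] by (simp add: Z0_def diagm_def transpose_def vec_eq_iff)
  have Zsym: "transpose Z = Z" unfolding Z_def by (rule iter_sym[OF Z0sym])
  have pX: "pos_def X" using assms(4) by (simp add: X_def Z_def Z0_def)
  have nS: "neg_def S" using assms(5) by (simp add: S_def Z_def Z0_def)
  have Xsym: "transpose X = X" using pX by (simp add: pos_def_def)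
  have Ssym: "transpose S = S" using nS by (simp add: neg_def_def)
  have ga: "lam_min X > 0" by (rule pos_def_lam[OF pX])
  have gb: "lam_max S < 0" by (rule neg_def_lam[OF nS])
  have g: "g > 0" using ga gb by (simp add: g_def)
  have g': "lam_min X - lam_max S > 0" using g by (simp add: g_def)
  have eta_eq: "\<eta> = sqrt (real (min CARD('r) CARD('s))) / g"
    by (simp add: \<eta>_def eta_of_def g_def X_def S_def)
  have card_pos: "real (min CARD('r) CARD('s)) \<ge> 1" by simp
  have eta_pos: "\<eta> > 0" using g card_pos by (simp add: eta_eq)
  have N0: "N \<ge> 0" by (simp add: N_def sn_nonneg)
  have O0: "spec_norm Ob \<ge> 0" by (rule sn_nonneg)
  have sol_iff: "sylv_sol Z W \<longleftrightarrow> sylvL X S W = Ob" for W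
    by (simp add: sylv_sol_def sylvL_def X_def S_def Ob_def)
  have P1: "\<exists>!W. sylv_sol Z W"
    using sylv_unique_exists[OF Xsym Ssym g', of Ob] by (simp add: sol_iff)
  have P2: "spec_norm W \<le> \<eta> * spec_norm Ob" if W: "sylv_sol Z W" for W
  proof -
    have "spec_norm W \<le> norm W" by (rule sn_le_norm)
    also have "\<dots> \<le> norm (sylvL X S W) / g" using sylv_frob[OF Xsym Ssym g', of W] by (simp add: g_def)
    also have "\<dots> = norm Ob / g" using W sol_iff by simp
    also have "\<dots> \<le> sqrt (real (min CARD('r) CARD('s))) * spec_norm Ob / g"
      using norm_le_sqrt_sn[of Ob] g by (simp add: divide_right_mono)
    also have "\<dots> = \<eta> * spec_norm Ob" by (simp add: eta_eq)
    finally show ?thesis .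
  qed
  define V where "V = (THE W. sylv_sol Z W)"
  have V: "sylv_sol Z V" unfolding V_def using P1 by (rule theI')
  have VO: "sylvL X S V = Ob" using V sol_iff by simp
  have Vn: "spec_norm V \<le> \<eta> * spec_norm Ob" by (rule P2[OF V])
  define W where "W = skewW V"
  define Z' where "Z' = elim_iter Z0 (Suc l)"
  define w where "w = sqm_of W"
  define z where "z = sqm_of Z"
  have Z'eq: "Z' = mat_of (exp (- w) * z * exp w)"
    unfolding Z'_def iter_Suc Z_def[symmetric] w_def z_def W_def V_def by (rule step_eq)
  define C where "C = Z ** W - W ** Z"
  define R where "R = Z' - Z - C"
  have Req: "R = mat_of (exp (- w) * z * exp w - z - (z * w - w * z))"
    by (simp add: R_def C_def Z'eq mat_of_minus mat_of_mult w_def z_def)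
  have tW: "spec_norm W \<le> \<eta> * spec_norm Ob" using sn_skewW[of V] Vn by (simp add: W_def)
  have t34: "\<eta> * spec_norm Ob \<le> 3/4"
  proof -
    have "spec_norm Ob \<le> 3 / (4 * \<eta>)" using assms(6) by (simp add: Ob_def \<eta>_def Z_def Z0_def)
    then have "\<eta> * spec_norm Ob \<le> \<eta> * (3 / (4 * \<eta>))" by (rule mult_left_mono) (use eta_pos in auto)
    also have "\<dots> = 3/4" using eta_pos by simp
    finally show ?thesis .
  qed
  have Rn: "spec_norm R \<le> N * (13/3 * (\<eta> * spec_norm Ob)^2)"
  proof -
    have nw: "norm w = spec_norm W" by (simp add: norm_sqm_def' w_def)
    have nz: "norm z \<le> N" using iter_norm[of Z0 l] by (simp add: norm_sqm_def' z_def Z_def N_def)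
    have "spec_norm R = norm (exp (- w) * z * exp w - z - (z * w - w * z))"
      by (simp add: Req norm_sqm_def')
    also have "\<dots> \<le> norm z * (exp (2 * norm w) - 1 - 2 * norm w)" by (rule conj_rem)
    also have "\<dots> \<le> N * (exp (2 * norm w) - 1 - 2 * norm w)"
    proof (rule mult_right_mono[OF nz])
      show "0 \<le> exp (2 * norm w) - 1 - 2 * norm w" using exp_ge_add_one_self[of "2 * norm w"] by linarith
    qed
    also have "\<dots> \<le> N * (13/3 * (\<eta> * spec_norm Ob)^2)"
    proof (rule mult_left_mono[OF _ N0])
      have "exp (2 * norm w) - 1 - 2 * norm w \<le> 13/3 * (norm w)^2"
        by (rule exp_2t_bound) (use tW t34 nw sn_nonneg[of W] in auto)
      also have "\<dots> \<le> 13/3 * (\<eta> * spec_norm Ob)^2"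
        using tW nw sn_nonneg[of W] by (simp add: power_mono)
      finally show "exp (2 * norm w) - 1 - 2 * norm w \<le> 13/3 * (\<eta> * spec_norm Ob)^2" .
    qed
    finally show ?thesis .
  qed
  have Z'dec: "Z' = Z + C + R" by (simp add: R_def)
  define B where "B = 2 * \<eta> * (spec_norm Ob)^2 + N * (13/3 * (\<eta> * spec_norm Ob)^2)"
  have prodb: "spec_norm Ob * spec_norm V \<le> \<eta> * (spec_norm Ob)^2"
    using mult_left_mono[OF Vn O0] by (simp add: power2_eq_square mult_ac)
  have bX: "spec_norm (blkX Z' - X) \<le> B"
  proof -
    define P where "P = transpose Ob ** V"
    define Q where "Q = transpose V ** Ob"
    have "blkX C = P + Q" unfolding C_def W_def Ob_def P_def Q_def by (rule cX[OF Zsym])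
    then have e: "blkX Z' - X = (P + Q) + blkX R" by (simp add: Z'dec X_def blkX_add)
    have 1: "spec_norm (blkX Z' - X) \<le> spec_norm (P + Q) + spec_norm (blkX R)" unfolding e by (rule sn_add)
    have 2: "spec_norm (P + Q) \<le> spec_norm P + spec_norm Q" by (rule sn_add)
    have 3: "spec_norm P \<le> spec_norm Ob * spec_norm V" unfolding P_def by (rule sn_prod_t1)
    have 4: "spec_norm Q \<le> spec_norm Ob * spec_norm V"
      using sn_prod_t1[of V Ob] by (simp add: Q_def mult.commute)
    have 5: "spec_norm (blkX R) \<le> spec_norm R" by (rule sn_blkX)
    have 6: "2 * \<eta> * (spec_norm Ob)^2 = \<eta> * (spec_norm Ob)^2 + \<eta> * (spec_norm Ob)^2" by simp
    show ?thesis using 1 2 3 4 5 6 Rn prodb unfolding B_def by linarith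
  qed
  have bS: "spec_norm (blkS Z' - S) \<le> B"
  proof -
    define P where "P = Ob ** transpose V"
    define Q where "Q = V ** transpose Ob"
    have "blkS C = - P - Q" unfolding C_def W_def Ob_def P_def Q_def by (rule cS[OF Zsym])
    then have e: "blkS Z' - S = (- P - Q) + blkS R" by (simp add: Z'dec S_def blkS_add)
    have 1: "spec_norm (blkS Z' - S) \<le> spec_norm (- P - Q) + spec_norm (blkS R)" unfolding e by (rule sn_add)
    have 2: "spec_norm (- P - Q) \<le> spec_norm (- P) + spec_norm Q" by (rule sn_diff)
    have 7: "spec_norm (- P) = spec_norm P" by (rule sn_uminus)
    have 3: "spec_norm P \<le> spec_norm Ob * spec_norm V" unfolding P_def by (rule sn_prod_t2)
    have 4: "spec_norm Q \<le> spec_norm Ob * spec_norm V"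
      using sn_prod_t2[of V Ob] by (simp add: Q_def mult.commute)
    have 5: "spec_norm (blkS R) \<le> spec_norm R" by (rule sn_blkS)
    have 6: "2 * \<eta> * (spec_norm Ob)^2 = \<eta> * (spec_norm Ob)^2 + \<eta> * (spec_norm Ob)^2" by simp
    show ?thesis using 1 2 7 3 4 5 6 Rn prodb unfolding B_def by linarith
  qed
  have bO: "spec_norm (blkO Z') \<le> B"
  proof -
    have "blkO C = S ** V - V ** X"
      unfolding C_def W_def S_def X_def by (rule cO)
    also have "\<dots> = - Ob" using VO unfolding sylvL_alt by (metis minus_diff_eq)
    finally have "blkO C = - Ob" .
    then have "blkO Z' = blkO R" by (simp add: Z'dec Ob_def blkO_add)
    then have "spec_norm (blkO Z') \<le> spec_norm R" using sn_blkO[of R] by simp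
    moreover have "0 \<le> 2 * \<eta> * (spec_norm Ob)^2" using eta_pos by simp
    ultimately show ?thesis using Rn by (simp add: B_def)
  qed
  have BR: "B \<le> (4/9 * \<eta> ^ 4 * N ^ 3 + 4/3 * \<eta> ^ 3 * N ^ 2 + 13/3 * \<eta> ^ 2 * N + 4 * \<eta>) * (spec_norm Ob)^2"
  proof -
    have h1: "0 \<le> 4/9 * \<eta> ^ 4 * N ^ 3 * (spec_norm Ob)^2" using eta_pos N0 by simp
    have h2: "0 \<le> 4/3 * \<eta> ^ 3 * N ^ 2 * (spec_norm Ob)^2" using eta_pos N0 by simp
    have h3: "0 \<le> \<eta> * (spec_norm Ob)^2" using eta_pos by simp
    have d: "(4/9 * \<eta> ^ 4 * N ^ 3 + 4/3 * \<eta> ^ 3 * N ^ 2 + 13/3 * \<eta> ^ 2 * N + 4 * \<eta>) * (spec_norm Ob)^2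
      = 4/9 * \<eta> ^ 4 * N ^ 3 * (spec_norm Ob)^2 + 4/3 * \<eta> ^ 3 * N ^ 2 * (spec_norm Ob)^2
        + 13/3 * \<eta> ^ 2 * N * (spec_norm Ob)^2 + 4 * (\<eta> * (spec_norm Ob)^2)"
      by (simp only: distrib_right mult.assoc)
    have e: "N * (13/3 * (\<eta> * spec_norm Ob)^2) = 13/3 * \<eta> ^ 2 * N * (spec_norm Ob)^2"
      by (simp only: power_mult_distrib mult_ac)
    have f: "2 * \<eta> * (spec_norm Ob)^2 = 2 * (\<eta> * (spec_norm Ob)^2)" by (simp only: mult.assoc)
    show ?thesis using h1 h2 h3 d e f unfolding B_def by linarith
  qed
  have main: "max (spec_norm (blkX Z' - X)) (max (spec_norm (blkS Z' - S)) (spec_norm (blkO Z'))) \<le>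
    (4/9 * \<eta> ^ 4 * N ^ 3 + 4/3 * \<eta> ^ 3 * N ^ 2 + 13/3 * \<eta> ^ 2 * N + 4 * \<eta>) * (spec_norm Ob)^2"
    using bX bS bO BR by simp
  show ?thesis
    unfolding Z0_def[symmetric] Z_def[symmetric] Z'_def[symmetric] X_def[symmetric] S_def[symmetric]
      Ob_def[symmetric] N_def[symmetric] \<eta>_def[symmetric]
    using P1 P2 main by blast
qed


end
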